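(* Let $G=(V,A)$ be a directed multigraph, $T^+,T^-\subseteq V$ disjoint, $T=T^+\cup T^-$, and let $k\in\mathbb{N}$, $k\geq1$. Then the family $$\mathcal X_k:=\{X\subseteq T:\ \text{there are disjoint } X\text{-cuts } S_1,\dots,S_k\in 2^V\}$$ is closed under set union and set intersection.
   Context: For $S\subseteq V$, $\delta(S)$ is the set of arcs with one endpoint in $S$ and the other in $V\setminus S$ (either direction). For $X\subseteq T$, sets $S_1,\dots,S_k\subseteq V$ are called disjoint $X$-cuts if $S_1\subseteq S_2\subseteq\dots\subseteq S_k$, each $S_i$ satisfies $X\cap T^+\subseteq S_i$ and $T^-\setminus X\subseteq V\setminus S_i$, and $\delta(S_i)\cap\delta(S_j)=\emptyset$ for all $i\ne j$. *)

theory Defs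
  imports Main
begin

definition multigraph :: "'a set \<Rightarrow> 'b set \<Rightarrow> ('b \<Rightarrow> 'a) \<Rightarrow> ('b \<Rightarrow> 'a) \<Rightarrow> bool" where
  "multigraph V A tail head \<longleftrightarrow> finite V \<and> finite A \<and> (\<forall>e\<in>A. tail e \<in> V \<and> head e \<in> V)"

definition cut_arcs :: "'a set \<Rightarrow> 'b set \<Rightarrow> ('b \<Rightarrow> 'a) \<Rightarrow> ('b \<Rightarrow> 'a) \<Rightarrow> 'a set \<Rightarrow> 'b set" where
  "cut_arcs V A tail head S = {e\<in>A. (tail e \<in> S \<and> head e \<in> V - S) \<or> (head e \<in> S \<and> tail e \<in> V - S)}"

definition disjoint_X_cuts ::
  "'a set \<Rightarrow> 'b set \<Rightarrow> ('b \<Rightarrow> 'a) \<Rightarrow> ('b \<Rightarrow> 'a) \<Rightarrow> 'a set \<Rightarrow> 'a set \<Rightarrow> 'a set \<Rightarrow> nat \<Rightarrow> (nat \<Rightarrow> 'a set) \<Rightarrow> bool" where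
  "disjoint_X_cuts V A tail head Tp Tm X k S \<longleftrightarrow>
     (\<forall>i\<in>{1..k}. S i \<subseteq> V) \<and>
     (\<forall>i\<in>{1..k}. \<forall>j\<in>{1..k}. i \<le> j \<longrightarrow> S i \<subseteq> S j) \<and>
     (\<forall>i\<in>{1..k}. X \<inter> Tp \<subseteq> S i \<and> Tm - X \<subseteq> V - S i) \<and>
     (\<forall>i\<in>{1..k}. \<forall>j\<in>{1..k}. i \<noteq> j \<longrightarrow>
        cut_arcs V A tail head (S i) \<inter> cut_arcs V A tail head (S j) = {})"

definition cut_family ::
  "'a set \<Rightarrow> 'b set \<Rightarrow> ('b \<Rightarrow> 'a) \<Rightarrow> ('b \<Rightarrow> 'a) \<Rightarrow> 'a set \<Rightarrow> 'a set \<Rightarrow> nat \<Rightarrow> 'a set set" where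
  "cut_family V A tail head Tp Tm k =
     {X. X \<subseteq> Tp \<union> Tm \<and> (\<exists>S. disjoint_X_cuts V A tail head Tp Tm X k S)}"

end

theory Submission
  imports Defs
begin

lemma cut_nested:
  assumes "S \<subseteq> S'"
  shows "e \<in> cut_arcs V A t h S \<inter> cut_arcs V A t h S' \<longleftrightarrow>
     e \<in> A \<and> ((t e \<in> S \<and> h e \<in> V - S') \<or> (h e \<in> S \<and> t e \<in> V - S'))"
  using assms by (auto simp: cut_arcs_def)

lemma disj_lt:
  fixes k :: nat
  assumes "\<And>i j. i \<in> {1..k} \<Longrightarrow> j \<in> {1..k} \<Longrightarrow> i < j \<Longrightarrow>
      cut_arcs V A t h (U i) \<inter> cut_arcs V A t h (U j) = {}"
  shows "\<forall>i\<in>{1..k}. \<forall>j\<in>{1..k}. i \<noteq> j \<longrightarrow>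
      cut_arcs V A t h (U i) \<inter> cut_arcs V A t h (U j) = {}"
proof (intro ballI impI)
  fix i j assume "i \<in> {1..k}" "j \<in> {1..k}" "i \<noteq> j"
  then show "cut_arcs V A t h (U i) \<inter> cut_arcs V A t h (U j) = {}"
  proof (cases "i < j")
    case True then show ?thesis using assms[of i j] \<open>i \<in> {1..k}\<close> \<open>j \<in> {1..k}\<close> by blast
  next
    case False then have "j < i" using \<open>i \<noteq> j\<close> by (meson linorder_neqE_nat)
    then show ?thesis using assms[of j i] \<open>i \<in> {1..k}\<close> \<open>j \<in> {1..k}\<close> by (simp add: Int_commute)
  qed
qed

lemma union_case:
  assumes S: "disjoint_X_cuts V A t h Tp Tm X k S"
    and R: "disjoint_X_cuts V A t h Tp Tm Y k R"
  shows "disjoint_X_cuts V A t h Tp Tm (X \<union> Y) k (\<lambda>i. S i \<union> R i)"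
proof -
  obtain S1 S2 S3 S4 where "(\<forall>i\<in>{1..k}. S i \<subseteq> V)" and
     S2: "(\<forall>i\<in>{1..k}. \<forall>j\<in>{1..k}. i \<le> j \<longrightarrow> S i \<subseteq> S j)" and
     S3: "(\<forall>i\<in>{1..k}. X \<inter> Tp \<subseteq> S i \<and> Tm - X \<subseteq> V - S i)" and
     S4: "(\<forall>i\<in>{1..k}. \<forall>j\<in>{1..k}. i \<noteq> j \<longrightarrow>
        cut_arcs V A t h (S i) \<inter> cut_arcs V A t h (S j) = {})"
    using S unfolding disjoint_X_cuts_def by (elim conjE) blast
  note S1 = this(1)
  obtain R1 R2 R3 R4 where "(\<forall>i\<in>{1..k}. R i \<subseteq> V)" and
     R2: "(\<forall>i\<in>{1..k}. \<forall>j\<in>{1..k}. i \<le> j \<longrightarrow> R i \<subseteq> R j)" and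
     R3: "(\<forall>i\<in>{1..k}. Y \<inter> Tp \<subseteq> R i \<and> Tm - Y \<subseteq> V - R i)" and
     R4: "(\<forall>i\<in>{1..k}. \<forall>j\<in>{1..k}. i \<noteq> j \<longrightarrow>
        cut_arcs V A t h (R i) \<inter> cut_arcs V A t h (R j) = {})"
    using R unfolding disjoint_X_cuts_def by (elim conjE) blast
  note R1 = this(1)
  have dd: "cut_arcs V A t h (S i \<union> R i) \<inter> cut_arcs V A t h (S j \<union> R j) = {}"
    if ij: "i \<in> {1..k}" "j \<in> {1..k}" "i < j" for i j
  proof (rule ccontr)
    assume "cut_arcs V A t h (S i \<union> R i) \<inter> cut_arcs V A t h (S j \<union> R j) \<noteq> {}"
    then obtain e where e: "e \<in> cut_arcs V A t h (S i \<union> R i) \<inter> cut_arcs V A t h (S j \<union> R j)" by blast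
    have ns: "S i \<subseteq> S j" "R i \<subseteq> R j" using S2 R2 ij by auto
    hence "S i \<union> R i \<subseteq> S j \<union> R j" by blast
    from e[unfolded cut_nested[OF this]]
    have "e \<in> cut_arcs V A t h (S i) \<inter> cut_arcs V A t h (S j) \<or>
          e \<in> cut_arcs V A t h (R i) \<inter> cut_arcs V A t h (R j)"
      unfolding cut_nested[OF ns(1)] cut_nested[OF ns(2)] by blast
    moreover have "i \<noteq> j" using ij by simp
    ultimately show False using S4 R4 ij by blast
  qed
  note D = disj_lt[where U="\<lambda>i. S i \<union> R i", OF dd]
  show ?thesis unfolding disjoint_X_cuts_def
  proof (intro conjI D)
    show "\<forall>i\<in>{1..k}. S i \<union> R i \<subseteq> V" using S1 R1 by blast
    show "\<forall>i\<in>{1..k}. \<forall>j\<in>{1..k}. i \<le> j \<longrightarrow> S i \<union> R i \<subseteq> S j \<union> R j" using S2 R2 by blast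
    show "\<forall>i\<in>{1..k}. (X \<union> Y) \<inter> Tp \<subseteq> S i \<union> R i \<and> Tm - (X \<union> Y) \<subseteq> V - (S i \<union> R i)"
    proof
      fix i assume "i \<in> {1..k}"
      then have "X \<inter> Tp \<subseteq> S i \<and> Tm - X \<subseteq> V - S i" "Y \<inter> Tp \<subseteq> R i \<and> Tm - Y \<subseteq> V - R i"
        using S3 R3 by auto
      then show "(X \<union> Y) \<inter> Tp \<subseteq> S i \<union> R i \<and> Tm - (X \<union> Y) \<subseteq> V - (S i \<union> R i)" by blast
    qed
  qed
qed

lemma inter_case:
  assumes S: "disjoint_X_cuts V A t h Tp Tm X k S"
    and R: "disjoint_X_cuts V A t h Tp Tm Y k R"
  shows "disjoint_X_cuts V A t h Tp Tm (X \<inter> Y) k (\<lambda>i. S i \<inter> R i)"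
proof -
  obtain S1 S2 S3 S4 where "(\<forall>i\<in>{1..k}. S i \<subseteq> V)" and
     S2: "(\<forall>i\<in>{1..k}. \<forall>j\<in>{1..k}. i \<le> j \<longrightarrow> S i \<subseteq> S j)" and
     S3: "(\<forall>i\<in>{1..k}. X \<inter> Tp \<subseteq> S i \<and> Tm - X \<subseteq> V - S i)" and
     S4: "(\<forall>i\<in>{1..k}. \<forall>j\<in>{1..k}. i \<noteq> j \<longrightarrow>
        cut_arcs V A t h (S i) \<inter> cut_arcs V A t h (S j) = {})"
    using S unfolding disjoint_X_cuts_def by (elim conjE) blast
  note S1 = this(1)
  obtain R1 R2 R3 R4 where "(\<forall>i\<in>{1..k}. R i \<subseteq> V)" and
     R2: "(\<forall>i\<in>{1..k}. \<forall>j\<in>{1..k}. i \<le> j \<longrightarrow> R i \<subseteq> R j)" and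
     R3: "(\<forall>i\<in>{1..k}. Y \<inter> Tp \<subseteq> R i \<and> Tm - Y \<subseteq> V - R i)" and
     R4: "(\<forall>i\<in>{1..k}. \<forall>j\<in>{1..k}. i \<noteq> j \<longrightarrow>
        cut_arcs V A t h (R i) \<inter> cut_arcs V A t h (R j) = {})"
    using R unfolding disjoint_X_cuts_def by (elim conjE) blast
  note R1 = this(1)
  have dd: "cut_arcs V A t h (S i \<inter> R i) \<inter> cut_arcs V A t h (S j \<inter> R j) = {}"
    if ij: "i \<in> {1..k}" "j \<in> {1..k}" "i < j" for i j
  proof (rule ccontr)
    assume "cut_arcs V A t h (S i \<inter> R i) \<inter> cut_arcs V A t h (S j \<inter> R j) \<noteq> {}"
    then obtain e where e: "e \<in> cut_arcs V A t h (S i \<inter> R i) \<inter> cut_arcs V A t h (S j \<inter> R j)" by blast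
    have ns: "S i \<subseteq> S j" "R i \<subseteq> R j" using S2 R2 ij by auto
    hence "S i \<inter> R i \<subseteq> S j \<inter> R j" by blast
    from e[unfolded cut_nested[OF this]]
    have "e \<in> cut_arcs V A t h (S i) \<inter> cut_arcs V A t h (S j) \<or>
          e \<in> cut_arcs V A t h (R i) \<inter> cut_arcs V A t h (R j)"
      unfolding cut_nested[OF ns(1)] cut_nested[OF ns(2)] by blast
    moreover have "i \<noteq> j" using ij by simp
    ultimately show False using S4 R4 ij by blast
  qed
  note D = disj_lt[where U="\<lambda>i. S i \<inter> R i", OF dd]
  show ?thesis unfolding disjoint_X_cuts_def
  proof (intro conjI D)
    show "\<forall>i\<in>{1..k}. S i \<inter> R i \<subseteq> V" using S1 R1 by blast
    show "\<forall>i\<in>{1..k}. \<forall>j\<in>{1..k}. i \<le> j \<longrightarrow> S i \<inter> R i \<subseteq> S j \<inter> R j" using S2 R2 by blast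
    show "\<forall>i\<in>{1..k}. (X \<inter> Y) \<inter> Tp \<subseteq> S i \<inter> R i \<and> Tm - (X \<inter> Y) \<subseteq> V - (S i \<inter> R i)"
    proof
      fix i assume "i \<in> {1..k}"
      then have "X \<inter> Tp \<subseteq> S i \<and> Tm - X \<subseteq> V - S i" "Y \<inter> Tp \<subseteq> R i \<and> Tm - Y \<subseteq> V - R i"
        using S3 R3 by auto
      then show "(X \<inter> Y) \<inter> Tp \<subseteq> S i \<inter> R i \<and> Tm - (X \<inter> Y) \<subseteq> V - (S i \<inter> R i)" by blast
    qed
  qed
qed

theorem lemma4:
  fixes V :: "'a set" and A :: "'b set" and tail head :: "'b \<Rightarrow> 'a"
    and Tp Tm :: "'a set" and k :: nat
  assumes "multigraph V A tail head"
    and "Tp \<subseteq> V" and "Tm \<subseteq> V" and "Tp \<inter> Tm = {}"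
    and "k \<ge> 1"
    and "X \<in> cut_family V A tail head Tp Tm k" and "Y \<in> cut_family V A tail head Tp Tm k"
  shows "X \<union> Y \<in> cut_family V A tail head Tp Tm k \<and> X \<inter> Y \<in> cut_family V A tail head Tp Tm k"
proof -
  obtain S R where S: "disjoint_X_cuts V A tail head Tp Tm X k S"
    and R: "disjoint_X_cuts V A tail head Tp Tm Y k R"
    and XY: "X \<subseteq> Tp \<union> Tm" "Y \<subseteq> Tp \<union> Tm"
    using assms(6,7) unfolding cut_family_def by blast
  show ?thesis unfolding cut_family_def
    using union_case[OF S R] inter_case[OF S R] XY by blast
qed

end
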